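(* Let $G$ be a finite simple graph and let $\tau,\tau'$ be two threshold assignments for the vertices of $G$ with $\overline{\tau}=\overline{\tau'}$. Let $r$ be an integer with $dyn_{\tau}(G)\leq r\leq dyn_{\tau'}(G)$. Then there exists a threshold assignment $\tau''$ with $\overline{\tau''}=\overline{\tau}$ such that $dyn_{\tau''}(G)=r$.
   Context: A threshold assignment is a function $\tau:V(G)\to\{0,1,2,\dots\}$; its average is $\overline{\tau}=\sum_{v\in V(G)}\tau(v)/|V(G)|$. A set $D\subseteq V(G)$ is a $\tau$-dynamic monopoly ($\tau$-dynamo) if for some $k\ge 0$ the vertex set can be partitioned into $D_0=D, D_1,\dots,D_k$ where for each $1\le i\le k$, $D_i$ consists of all vertices (outside $D_0\cup\dots\cup D_{i-1}$) having at least $\tau(v)$ neighbors in $D_0\cup\dots\cup D_{i-1}$. $dyn_\tau(G)$ denotes the minimum size of a $\tau$-dynamo of $G$. *)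

theory Defs
  imports Complex_Main
begin

definition simple_graph :: "'a set \<Rightarrow> ('a \<Rightarrow> 'a \<Rightarrow> bool) \<Rightarrow> bool" where
  "simple_graph V E \<longleftrightarrow> finite V \<and> (\<forall>u v. E u v \<longrightarrow> u \<in> V \<and> v \<in> V)
     \<and> (\<forall>u v. E u v \<longrightarrow> E v u) \<and> (\<forall>v. \<not> E v v)"

definition avg_threshold :: "'a set \<Rightarrow> ('a \<Rightarrow> nat) \<Rightarrow> real" where
  "avg_threshold V \<tau> = real (\<Sum>v\<in>V. \<tau> v) / real (card V)"

definition is_dynamo :: "'a set \<Rightarrow> ('a \<Rightarrow> 'a \<Rightarrow> bool) \<Rightarrow> ('a \<Rightarrow> nat) \<Rightarrow> 'a set \<Rightarrow> bool" where
  "is_dynamo V E \<tau> D \<longleftrightarrow> D \<subseteq> V \<and>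
     (\<exists>(k::nat) (Ds::nat \<Rightarrow> 'a set). Ds 0 = D \<and>
        (\<forall>i. 1 \<le> i \<and> i \<le> k \<longrightarrow>
            Ds i = {v \<in> V - (\<Union>j<i. Ds j). card {u \<in> (\<Union>j<i. Ds j). E v u} \<ge> \<tau> v}) \<and>
        (\<Union>i\<le>k. Ds i) = V)"

definition dyn :: "'a set \<Rightarrow> ('a \<Rightarrow> 'a \<Rightarrow> bool) \<Rightarrow> ('a \<Rightarrow> nat) \<Rightarrow> nat" where
  "dyn V E \<tau> = Min {card D | D. is_dynamo V E \<tau> D}"

end

theory Submission
  imports Defs
begin

fun act :: "'a set \<Rightarrow> ('a\<Rightarrow>'a\<Rightarrow>bool) \<Rightarrow> ('a\<Rightarrow>nat) \<Rightarrow> 'a set \<Rightarrow> nat \<Rightarrow> 'a set" where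
  "act V E t D 0 = D"
| "act V E t D (Suc i) = act V E t D i \<union> {v \<in> V - act V E t D i. t v \<le> card {u \<in> act V E t D i. E v u}}"

lemma dynamo_D1:
  assumes "is_dynamo V E t D"
  shows "D \<subseteq> V \<and> (\<exists>k. act V E t D k = V)"
proof -
  have D: "D \<subseteq> V" using assms unfolding is_dynamo_def by (rule conjunct1)
  have "\<exists>(k::nat) (Ds::nat \<Rightarrow> 'a set). Ds 0 = D \<and>
        (\<forall>i. 1 \<le> i \<and> i \<le> k \<longrightarrow>
            Ds i = {v \<in> V - (\<Union>j<i. Ds j). card {u \<in> (\<Union>j<i. Ds j). E v u} \<ge> t v}) \<and>
        (\<Union>i\<le>k. Ds i) = V" using assms unfolding is_dynamo_def by (rule conjunct2)
  then obtain k :: nat and Ds :: "nat \<Rightarrow> 'a set" where kD: "Ds 0 = D \<and>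
        (\<forall>i. 1 \<le> i \<and> i \<le> k \<longrightarrow>
            Ds i = {v \<in> V - (\<Union>j<i. Ds j). card {u \<in> (\<Union>j<i. Ds j). E v u} \<ge> t v}) \<and>
        (\<Union>i\<le>k. Ds i) = V" by blast
  note D0 = kD[THEN conjunct1] and Di = kD[THEN conjunct2, THEN conjunct1]
    and U = kD[THEN conjunct2, THEN conjunct2]
  have UA: "(\<Union>j\<le>i. Ds j) = act V E t D i" if "i \<le> k" for i
    using that
  proof (induction i)
    case 0 then show ?case using D0 by simp
  next
    case (Suc i)
    have h: "(\<Union>j\<le>i. Ds j) = act V E t D i" using Suc by simp
    have "(\<Union>j\<le>Suc i. Ds j) = (\<Union>j\<le>i. Ds j) \<union> Ds (Suc i)"
      by (simp add: atMost_Suc Un_commute)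
    moreover have "Ds (Suc i) = {v \<in> V - (\<Union>j<Suc i. Ds j). card {u \<in> (\<Union>j<Suc i. Ds j). E v u} \<ge> t v}"
      using Di[rule_format, of "Suc i"] Suc.prems by simp
    ultimately show ?case unfolding lessThan_Suc_atMost h by simp
  qed
  show ?thesis using UA[of k] U D by auto
qed


lemma dynamo_D2:
  assumes D: "D \<subseteq> V" and k: "act V E t D k = V"
  shows "is_dynamo V E t D"
proof -
  define Ds where "Ds i = (if i = 0 then D else {v \<in> V - act V E t D (i-1). t v \<le> card {u \<in> act V E t D (i-1). E v u}})" for i
  have U: "(\<Union>j\<le>i. Ds j) = act V E t D i" for i
    by (induction i) (auto simp: Ds_def atMost_Suc)
  have Di: "\<forall>i. 1 \<le> i \<and> i \<le> k \<longrightarrow>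
            Ds i = {v \<in> V - (\<Union>j<i. Ds j). card {u \<in> (\<Union>j<i. Ds j). E v u} \<ge> t v}"
  proof (intro allI impI)
    fix i :: nat assume "1 \<le> i \<and> i \<le> k"
    then obtain m where m: "i = Suc m" by (cases i) auto
    show "Ds i = {v \<in> V - (\<Union>j<i. Ds j). card {u \<in> (\<Union>j<i. Ds j). E v u} \<ge> t v}"
      unfolding m lessThan_Suc_atMost U by (simp add: Ds_def)
  qed
  have D0: "Ds 0 = D" by (simp add: Ds_def)
  have UU: "(\<Union>i\<le>k. Ds i) = V" using U k by simp
  show ?thesis unfolding is_dynamo_def
    apply (rule conjI[OF D])
    apply (rule exI[of _ k])
    apply (rule exI[of _ Ds])
    by (rule conjI[OF D0 conjI[OF Di UU]])
qed

lemma dynamo_iff: "is_dynamo V E t D \<longleftrightarrow> D \<subseteq> V \<and> (\<exists>k. act V E t D k = V)"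
  using dynamo_D1 dynamo_D2 by blast

lemma act_sub: "D \<subseteq> V \<Longrightarrow> act V E t D k \<subseteq> V"
  by (induction k) auto

lemma act_mono:
  assumes G: "simple_graph V E" and DD: "D \<subseteq> D'"
    and tt: "\<forall>v\<in>V - D'. t' v \<le> t v"
  shows "act V E t D k \<subseteq> act V E t' D' k"
proof (induction k)
  case 0 then show ?case using DD by simp
next
  case (Suc k)
  have D'sub: "D' \<subseteq> act V E t' D' k" by (induction k) auto
  show ?case
  proof
    fix v assume v: "v \<in> act V E t D (Suc k)"
    show "v \<in> act V E t' D' (Suc k)"
    proof (cases "v \<in> act V E t D k \<or> v \<in> act V E t' D' k")
      case True then show ?thesis using Suc by auto
    next
      case False
      then have vV: "v \<in> V" and c: "t v \<le> card {u \<in> act V E t D k. E v u}"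
        and nv: "v \<notin> act V E t' D' k" using v by auto
      have fin: "finite {u \<in> act V E t' D' k. E v u}"
        using G unfolding simple_graph_def
        by (metis (no_types, lifting) finite_subset mem_Collect_eq subsetI)
      have "card {u \<in> act V E t D k. E v u} \<le> card {u \<in> act V E t' D' k. E v u}"
        using Suc fin by (intro card_mono) auto
      moreover have "t' v \<le> t v" using tt vV nv D'sub by auto
      ultimately show ?thesis using vV nv c by auto
    qed
  qed
qed

lemma dynamo_mono:
  assumes G: "simple_graph V E" and d: "is_dynamo V E t D" and DD: "D \<subseteq> D'" and D'V: "D' \<subseteq> V"
    and tt: "\<forall>v\<in>V - D'. t' v \<le> t v"
  shows "is_dynamo V E t' D'"
proof -
  obtain k where "act V E t D k = V" "D \<subseteq> V" using dynamo_D1[OF d] by blast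
  then have "act V E t' D' k = V" using act_mono[OF G DD tt, of k] act_sub[OF D'V] by blast
  then show ?thesis using dynamo_D2[OF D'V] by blast
qed

lemma dyn_props:
  assumes G: "simple_graph V E"
  shows "\<exists>D. is_dynamo V E t D \<and> card D = dyn V E t"
    and "is_dynamo V E t D \<Longrightarrow> dyn V E t \<le> card D"
proof -
  have fV: "finite V" using G simple_graph_def by blast
  have fin: "finite {card D | D. is_dynamo V E t D}"
  proof (rule finite_subset[of _ "{0..card V}"])
    show "{card D | D. is_dynamo V E t D} \<subseteq> {0..card V}"
    proof
      fix x assume "x \<in> {card D | D. is_dynamo V E t D}"
      then obtain D where x: "x = card D" and d: "is_dynamo V E t D" by blast
      from dynamo_D1[OF d] have "D \<subseteq> V" by blast
      then show "x \<in> {0..card V}" using card_mono[OF fV] x by simp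
    qed
  qed simp
  have ne: "is_dynamo V E t V" by (rule dynamo_D2[of V V E t 0]) simp_all
  have "card V \<in> {card D | D. is_dynamo V E t D}" using ne by blast
  then have nee: "{card D | D. is_dynamo V E t D} \<noteq> {}" by blast
  have "dyn V E t \<in> {card D | D. is_dynamo V E t D}"
    unfolding dyn_def by (rule Min_in[OF fin nee])
  then show "\<exists>D. is_dynamo V E t D \<and> card D = dyn V E t"
    by auto
  assume "is_dynamo V E t D"
  then have "card D \<in> {card D | D. is_dynamo V E t D}" by blast
  then show "dyn V E t \<le> card D"
    unfolding dyn_def by (rule Min_le[OF fin])
qed

lemma dyn_step:
  assumes G: "simple_graph V E" and w: "w \<in> V" and tt: "\<forall>v\<in>V - {w}. t' v \<le> t v"
  shows "dyn V E t' \<le> dyn V E t + 1"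
proof -
  obtain D where D: "is_dynamo V E t D" "card D = dyn V E t" using dyn_props(1)[OF G] by blast
  have DV: "D \<subseteq> V" using dynamo_D1[OF D(1)] by blast
  have fV: "finite V" using G simple_graph_def by blast
  have "is_dynamo V E t' (insert w D)"
    using dynamo_mono[OF G D(1), of "insert w D" t'] DV w tt by auto
  then have "dyn V E t' \<le> card (insert w D)" using dyn_props(2)[OF G] by blast
  also have "\<dots> \<le> card D + 1" using finite_subset[OF DV fV] by (simp add: card_insert_if)
  finally show ?thesis using D by simp
qed

lemma dyn_cong:
  assumes G: "simple_graph V E" and tt: "\<forall>v\<in>V. t' v = t v"
  shows "dyn V E t' = dyn V E t"
proof -
  have "dyn V E t' \<le> dyn V E t" if "\<forall>v\<in>V. t' v \<le> t v" for t t'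
  proof -
    obtain D where D: "is_dynamo V E t D" "card D = dyn V E t" using dyn_props(1)[OF G] by blast
    have DV: "D \<subseteq> V" using dynamo_D1[OF D(1)] by blast
    have "is_dynamo V E t' D" using dynamo_mono[OF G D(1) order_refl DV] that by auto
    then show ?thesis using dyn_props(2)[OF G] D by metis
  qed
  then show ?thesis using tt by (simp add: order_antisym)
qed


lemma uw:
  assumes fV: "finite V" and s: "(\<Sum>v\<in>V. t v) = (\<Sum>v\<in>V. t' v)"
      and ne: "\<exists>v\<in>V. (t::'a\<Rightarrow>nat) v \<noteq> t' v"
  shows "\<exists>u\<in>V. t' u < t u" "\<exists>w\<in>V. t w < t' w"
proof -
    show u: "\<exists>u\<in>V. t' u < t u"
    proof (rule ccontr)
      assume "\<not> ?thesis"
      then have le: "\<forall>v\<in>V. t v \<le> t' v" by auto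
      then obtain v where "v \<in> V" "t v < t' v" using ne by force
      then have "(\<Sum>v\<in>V. t v) < (\<Sum>v\<in>V. t' v)" using sum_strict_mono_ex1[OF fV] le by blast
      then show False using s by simp
    qed
    show w: "\<exists>w\<in>V. t w < t' w"
    proof (rule ccontr)
      assume "\<not> ?thesis"
      then have le: "\<forall>v\<in>V. t' v \<le> t v" by auto
      then obtain v where "v \<in> V" "t' v < t v" using ne by force
      then have "(\<Sum>v\<in>V. t' v) < (\<Sum>v\<in>V. t v)" using sum_strict_mono_ex1[OF fV] le by blast
      then show False using s by simp
    qed
qed

lemma main_ind:
  assumes G: "simple_graph V E"
  shows "\<forall>t. (\<Sum>v\<in>V. t v - t' v) = n \<longrightarrow> (\<Sum>v\<in>V. t v) = (\<Sum>v\<in>V. t' v)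
     \<longrightarrow> dyn V E t \<le> r \<longrightarrow> r \<le> dyn V E t'
     \<longrightarrow> (\<exists>t''. (\<Sum>v\<in>V. t'' v) = (\<Sum>v\<in>V. t v) \<and> dyn V E t'' = r)"
proof (induction n)
  case 0
  have fV: "finite V" using G simple_graph_def by blast
  show ?case
  proof (intro allI impI)
    fix t :: "'a \<Rightarrow> nat"
    assume m: "(\<Sum>v\<in>V. t v - t' v) = 0" and s: "(\<Sum>v\<in>V. t v) = (\<Sum>v\<in>V. t' v)"
      and a: "dyn V E t \<le> r" and b: "r \<le> dyn V E t'"
    have "\<forall>v\<in>V. t v = t' v"
    proof (rule ccontr)
      assume "\<not> ?thesis"
      then obtain u where "u \<in> V" "t' u < t u" using uw(1)[OF fV s] by blast
      then have "0 < (\<Sum>v\<in>V. t v - t' v)"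
        using fV by (metis (no_types, lifting) sum_pos2 zero_less_diff zero_le)
      then show False using m by simp
    qed
    then have "dyn V E t = dyn V E t'" using dyn_cong[OF G] by metis
    then show "\<exists>t''. (\<Sum>v\<in>V. t'' v) = (\<Sum>v\<in>V. t v) \<and> dyn V E t'' = r"
      using a b by (intro exI[of _ t]) auto
  qed
next
  case (Suc n)
  have fV: "finite V" using G simple_graph_def by blast
  show ?case
  proof (intro allI impI)
    fix t :: "'a \<Rightarrow> nat"
    assume m: "(\<Sum>v\<in>V. t v - t' v) = Suc n" and s: "(\<Sum>v\<in>V. t v) = (\<Sum>v\<in>V. t' v)"
      and a: "dyn V E t \<le> r" and b: "r \<le> dyn V E t'"
    show "\<exists>t''. (\<Sum>v\<in>V. t'' v) = (\<Sum>v\<in>V. t v) \<and> dyn V E t'' = r"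
    proof (cases "dyn V E t = r")
      case True then show ?thesis by blast
    next
      case False
      then have a': "dyn V E t < r" using a by simp
      have ne: "\<exists>v\<in>V. t v \<noteq> t' v"
      proof (rule ccontr)
        assume "\<not> ?thesis"
        then have "dyn V E t = dyn V E t'" using dyn_cong[OF G] by auto
        then show False using a' b by simp
      qed
      obtain u where u: "u \<in> V" "t' u < t u" using uw(1)[OF fV s ne] by blast
      obtain w where w: "w \<in> V" "t w < t' w" using uw(2)[OF fV s ne] by blast
      have uw': "u \<noteq> w" using u w by auto
      define t1 where "t1 = t(u := t u - 1, w := t w + 1)"
      have s1: "(\<Sum>v\<in>V. t1 v) = (\<Sum>v\<in>V. t v)"
      proof -
        have "(\<Sum>v\<in>V. t1 v) = t1 u + t1 w + (\<Sum>v\<in>V-{u}-{w}. t1 v)"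
          using fV u w uw' by (simp add: sum.remove[of V u] sum.remove[of "V-{u}" w])
        also have "(\<Sum>v\<in>V-{u}-{w}. t1 v) = (\<Sum>v\<in>V-{u}-{w}. t v)"
          by (rule sum.cong) (auto simp: t1_def)
        also have "t1 u + t1 w + (\<Sum>v\<in>V-{u}-{w}. t v) = t u + t w + (\<Sum>v\<in>V-{u}-{w}. t v)"
          using u uw' by (simp add: t1_def)
        also have "\<dots> = (\<Sum>v\<in>V. t v)"
          using fV u w uw' by (simp add: sum.remove[of V u] sum.remove[of "V-{u}" w])
        finally show ?thesis .
      qed
      have m1: "(\<Sum>v\<in>V. t1 v - t' v) = n"
      proof -
        have "(\<Sum>v\<in>V. t1 v - t' v) = (t1 u - t' u) + (t1 w - t' w) + (\<Sum>v\<in>V-{u}-{w}. t1 v - t' v)"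
          using fV u w uw' by (simp add: sum.remove[of V u] sum.remove[of "V-{u}" w])
        also have "(\<Sum>v\<in>V-{u}-{w}. t1 v - t' v) = (\<Sum>v\<in>V-{u}-{w}. t v - t' v)"
          by (rule sum.cong) (auto simp: t1_def)
        also have "(t1 u - t' u) + (t1 w - t' w) + (\<Sum>v\<in>V-{u}-{w}. t v - t' v)
             = (t u - t' u) + (t w - t' w) + (\<Sum>v\<in>V-{u}-{w}. t v - t' v) - 1"
          using u w uw' by (simp add: t1_def)
        also have "(t u - t' u) + (t w - t' w) + (\<Sum>v\<in>V-{u}-{w}. t v - t' v) = Suc n"
          using fV u w uw' m by (simp add: sum.remove[of V u] sum.remove[of "V-{u}" w])
        finally show ?thesis by simp
      qed
      have "dyn V E t1 \<le> dyn V E t + 1"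
        using dyn_step[OF G w(1), of t1 t] by (auto simp: t1_def)
      then have "dyn V E t1 \<le> r" using a' by simp
      moreover have "(\<Sum>v\<in>V. t1 v) = (\<Sum>v\<in>V. t' v)" using s1 s by simp
      ultimately have "\<exists>t''. (\<Sum>v\<in>V. t'' v) = (\<Sum>v\<in>V. t1 v) \<and> dyn V E t'' = r"
        using Suc.IH m1 b by simp
      then show ?thesis using s1 by simp
    qed
  qed
qed

theorem proposition1:
  fixes V :: "'a set" and E :: "'a \<Rightarrow> 'a \<Rightarrow> bool"
    and \<tau> \<tau>' :: "'a \<Rightarrow> nat" and r :: int
  assumes "simple_graph V E"
    and "avg_threshold V \<tau> = avg_threshold V \<tau>'"
    and "int (dyn V E \<tau>) \<le> r" and "r \<le> int (dyn V E \<tau>')"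
  shows "\<exists>\<tau>'' :: 'a \<Rightarrow> nat. avg_threshold V \<tau>'' = avg_threshold V \<tau> \<and> int (dyn V E \<tau>'') = r"
proof -
  have fV: "finite V" using assms(1) simple_graph_def by blast
  obtain n where n: "r = int n" using assms(3) by (metis nonneg_int_cases of_nat_0_le_iff order_trans)
  have s: "(\<Sum>v\<in>V. \<tau> v) = (\<Sum>v\<in>V. \<tau>' v)"
  proof (cases "card V = 0")
    case True then have "V = {}" using fV by simp
    then show ?thesis by simp
  next
    case False
    have "real (\<Sum>v\<in>V. \<tau> v) / real (card V) = real (\<Sum>v\<in>V. \<tau>' v) / real (card V)"
      using assms(2) unfolding avg_threshold_def .
    then show ?thesis using False by (metis divide_cancel_right of_nat_0_eq_iff of_nat_eq_iff)
  qed
  have a: "dyn V E \<tau> \<le> n" and b: "n \<le> dyn V E \<tau>'" using assms(3,4) n by simp_all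
  have H: "(\<Sum>v\<in>V. \<tau> v - \<tau>' v) = (\<Sum>v\<in>V. \<tau> v - \<tau>' v) \<longrightarrow> (\<Sum>v\<in>V. \<tau> v) = (\<Sum>v\<in>V. \<tau>' v)
     \<longrightarrow> dyn V E \<tau> \<le> n \<longrightarrow> n \<le> dyn V E \<tau>'
     \<longrightarrow> (\<exists>t''. (\<Sum>v\<in>V. t'' v) = (\<Sum>v\<in>V. \<tau> v) \<and> dyn V E t'' = n)"
    using main_ind[OF assms(1), where t'="\<tau>'" and n="\<Sum>v\<in>V. \<tau> v - \<tau>' v" and r=n]
    by (rule spec)
  have "\<exists>t''. (\<Sum>v\<in>V. t'' v) = (\<Sum>v\<in>V. \<tau> v) \<and> dyn V E t'' = n"
    using H s a b by blast
  then obtain t'' where "(\<Sum>v\<in>V. t'' v) = (\<Sum>v\<in>V. \<tau> v)" "dyn V E t'' = n" by blast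
  then have "avg_threshold V t'' = avg_threshold V \<tau>" "int (dyn V E t'') = r"
    using n unfolding avg_threshold_def by simp_all
  then show ?thesis by blast
qed

end
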